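(* Consider the weighted stochastic block model: there are $r$ latent communities labelled $1,\ldots,r$; each node $i$ is independently assigned a latent community $Z_i$ with $\mathbb{P}(Z_i=z)=p_z>0$ for $z=1,\ldots,r$; each unordered pair of distinct nodes $i\neq j$ carries a real-valued edge weight $X_{i,j}=X_{j,i}$, where, conditional on the community indicators, the edge weights are independent and $X_{i,j}$ has distribution function $F_{z_1,z_2}(x)=\mathbb{P}(X_{i,j}\le x\mid Z_i=z_1,Z_j=z_2)$. For a positive integer $q$ define, for distinct nodes $i,i_1,\ldots,i_q$, $$F_z^q(x_1,\ldots,x_q):=\mathbb{P}(X_{i,i_1}\le x_1,\ X_{i_1,i_2}\le x_2,\ \ldots,\ X_{i_1,i_q}\le x_q\mid Z_i=z),\qquad z=1,\ldots,r.$$ Suppose there exists a finite integer $q$ such that the functions $F_1^q,\ldots,F_r^q$ are linearly independent, and let $q_{\min}$ be the smallest such integer. If $q_{\min}$ is positive, then the weighted stochastic block model (the number of communities $r$, the community distribution $\boldsymbol{p}=(p_1,\ldots,p_r)'$, and the conditional distributions $F_{z_1,z_2}$) is nonparametrically identified from the distribution of the edge weights, up to relabeling of the latent communities.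
   Context: "Nonparametrically identified up to relabeling" means that any two weighted stochastic block models satisfying the assumptions and inducing the same joint distribution of observed edge weights (on sufficiently many nodes) have the same $r$ and have $(\boldsymbol{p},\{F_{z_1,z_2}\})$ equal up to a single permutation of the community labels, with no parametric restrictions imposed on the $F_{z_1,z_2}$. *)

theory Defs
  imports "HOL-Probability.Probability"
begin

definition wsbm_model :: "nat \<Rightarrow> (nat \<Rightarrow> real) \<Rightarrow> (nat \<Rightarrow> nat \<Rightarrow> real measure) \<Rightarrow> bool" where
  "wsbm_model r p F \<longleftrightarrow>
     r \<ge> 1 \<and> (\<forall>z\<in>{1..r}. p z > 0) \<and> (\<Sum>z=1..r. p z) = 1 \<and>
     (\<forall>a\<in>{1..r}. \<forall>b\<in>{1..r}. real_distribution (F a b) \<and> F a b = F b a)"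

text \<open>Probability, for nodes 0..n-1, of the event that every edge (i,j) in E
has weight X_ij \<le> t (i,j) and the community vector satisfies Zc: obtained by summing
over all community assignments z of the nodes (i.i.d. with law p) the conditional
(independent) edge probabilities.\<close>

definition wsbm_event_prob ::
  "nat \<Rightarrow> (nat \<Rightarrow> real) \<Rightarrow> (nat \<Rightarrow> nat \<Rightarrow> real measure) \<Rightarrow> nat \<Rightarrow> (nat \<times> nat) set
    \<Rightarrow> (nat \<times> nat \<Rightarrow> real) \<Rightarrow> ((nat \<Rightarrow> nat) \<Rightarrow> bool) \<Rightarrow> real" where
  "wsbm_event_prob r p F n E t Zc =
     (\<Sum>z\<in>{..<n} \<rightarrow>\<^sub>E {1..r}.
        (\<Prod>i<n. p (z i)) * (if Zc z then 1 else 0) *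
        (\<Prod>e\<in>E. cdf (F (z (fst e)) (z (snd e))) (t e)))"

definition all_pairs :: "nat \<Rightarrow> (nat \<times> nat) set" where
  "all_pairs n = {(i, j). i < j \<and> j < n}"

definition wsbm_joint_cdf ::
  "nat \<Rightarrow> (nat \<Rightarrow> real) \<Rightarrow> (nat \<Rightarrow> nat \<Rightarrow> real measure) \<Rightarrow> nat \<Rightarrow> (nat \<times> nat \<Rightarrow> real) \<Rightarrow> real" where
  "wsbm_joint_cdf r p F n t = wsbm_event_prob r p F n (all_pairs n) t (\<lambda>_. True)"

text \<open>Edges used in F_z^q with nodes i = 0, i_1 = 1, ..., i_q = q:
(i,i_1), (i_1,i_2), ..., (i_1,i_q).\<close>
definition star_edges :: "nat \<Rightarrow> (nat \<times> nat) set" where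
  "star_edges q = {(a, b). (a = 0 \<and> b = 1 \<and> 1 \<le> q) \<or> (a = 1 \<and> 2 \<le> b \<and> b \<le> q)}"

text \<open>F_z^q(x_1,...,x_q) = P(X_{i,i_1} \<le> x_1, X_{i_1,i_2} \<le> x_2, ..., X_{i_1,i_q} \<le> x_q | Z_i = z);
the argument x is read only at coordinates 1..q.\<close>
definition Fq ::
  "nat \<Rightarrow> (nat \<Rightarrow> real) \<Rightarrow> (nat \<Rightarrow> nat \<Rightarrow> real measure) \<Rightarrow> nat \<Rightarrow> nat \<Rightarrow> (nat \<Rightarrow> real) \<Rightarrow> real" where
  "Fq r p F q z x =
     wsbm_event_prob r p F (q + 1) (star_edges q) (\<lambda>e. x (snd e)) (\<lambda>zz. zz 0 = z) / p z"

definition Fq_lin_indep :: "nat \<Rightarrow> (nat \<Rightarrow> real) \<Rightarrow> (nat \<Rightarrow> nat \<Rightarrow> real measure) \<Rightarrow> nat \<Rightarrow> bool" where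
  "Fq_lin_indep r p F q \<longleftrightarrow>
     (\<forall>c :: nat \<Rightarrow> real. (\<forall>x. (\<Sum>z=1..r. c z * Fq r p F q z x) = 0) \<longrightarrow> (\<forall>z\<in>{1..r}. c z = 0))"

definition wsbm_assumptions :: "nat \<Rightarrow> (nat \<Rightarrow> real) \<Rightarrow> (nat \<Rightarrow> nat \<Rightarrow> real measure) \<Rightarrow> bool" where
  "wsbm_assumptions r p F \<longleftrightarrow>
     wsbm_model r p F \<and> (\<exists>q. Fq_lin_indep r p F q) \<and> (LEAST q. Fq_lin_indep r p F q) > 0"

end

theory Submission
  imports Defs
begin


lemma sum_PiE_insert:
  assumes "a \<notin> N"
  shows "(\<Sum>z\<in>PiE (insert a N) (\<lambda>_. S). G z) = (\<Sum>s\<in>S. \<Sum>z\<in>PiE N (\<lambda>_. S). G (z(a:=s)))"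
proof -
  have "(\<Sum>z\<in>PiE (insert a N) (\<lambda>_. S). G z) = (\<Sum>x\<in>S \<times> PiE N (\<lambda>_. S). G ((\<lambda>(y, g). g(a := y)) x))"
    unfolding PiE_insert_eq
    by (subst sum.reindex) (use inj_combinator[OF assms, of "\<lambda>_. S"] in auto)
  also have "\<dots> = (\<Sum>s\<in>S. \<Sum>z\<in>PiE N (\<lambda>_. S). G (z(a:=s)))"
    by (simp add: sum.cartesian_product case_prod_beta)
  finally show ?thesis .
qed

definition kprod :: "(nat \<Rightarrow> nat \<Rightarrow> real measure) \<Rightarrow> (nat \<times> nat) set \<Rightarrow> (nat \<times> nat \<Rightarrow> real) \<Rightarrow> (nat \<Rightarrow> nat) \<Rightarrow> real" where
  "kprod F E t w = (\<Prod>e\<in>E. cdf (F (w (fst e)) (w (snd e))) (t e))"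

definition mrg :: "nat set \<Rightarrow> (nat \<Rightarrow> nat) \<Rightarrow> (nat \<Rightarrow> nat) \<Rightarrow> nat \<Rightarrow> nat" where
  "mrg N z u = (\<lambda>i. if i \<in> N then z i else u i)"

definition ends :: "(nat \<times> nat) set \<Rightarrow> nat set" where
  "ends E = fst ` E \<union> snd ` E"

definition gs :: "nat \<Rightarrow> (nat \<Rightarrow> real) \<Rightarrow> (nat \<Rightarrow> nat \<Rightarrow> real measure) \<Rightarrow> nat set \<Rightarrow> (nat \<times> nat) set
    \<Rightarrow> (nat \<times> nat \<Rightarrow> real) \<Rightarrow> (nat \<Rightarrow> nat) \<Rightarrow> real" where
  "gs r p F N E t u = (\<Sum>z\<in>N \<rightarrow>\<^sub>E {1..r}. (\<Prod>i\<in>N. p (z i)) * kprod F E t (mrg N z u))"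

lemma kprod_cong:
  assumes "\<And>i. i \<in> ends E \<Longrightarrow> w i = w' i"
  shows "kprod F E t w = kprod F E t w'"
  unfolding kprod_def using assms by (intro prod.cong) (auto simp: ends_def)

lemma kprod_tcong:
  assumes "\<And>e. e \<in> E \<Longrightarrow> t e = t' e"
  shows "kprod F E t w = kprod F E t' w"
  unfolding kprod_def using assms by (intro prod.cong) auto

lemma gs_ins:
  assumes "a \<notin> N" "finite N"
  shows "gs r p F (insert a N) E t u = (\<Sum>s\<in>{1..r}. p s * gs r p F N E t (u(a:=s)))"
proof -
  have "gs r p F (insert a N) E t u =
     (\<Sum>s\<in>{1..r}. \<Sum>z\<in>N \<rightarrow>\<^sub>E {1..r}. (\<Prod>i\<in>insert a N. p ((z(a:=s)) i)) * kprod F E t (mrg (insert a N) (z(a:=s)) u))"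
    unfolding gs_def by (rule sum_PiE_insert[OF assms(1)])
  also have "\<dots> = (\<Sum>s\<in>{1..r}. \<Sum>z\<in>N \<rightarrow>\<^sub>E {1..r}. p s * ((\<Prod>i\<in>N. p (z i)) * kprod F E t (mrg N z (u(a:=s)))))"
  proof (intro sum.cong refl)
    fix s z
    have "(\<Prod>i\<in>insert a N. p ((z(a:=s)) i)) = p s * (\<Prod>i\<in>N. p (z i))"
    proof -
      have "(\<Prod>i\<in>N. p ((z(a:=s)) i)) = (\<Prod>i\<in>N. p (z i))"
        by (rule prod.cong) (use assms in auto)
      then show ?thesis using assms by (simp add: prod.insert)
    qed
    moreover have "mrg (insert a N) (z(a:=s)) u = mrg N z (u(a:=s))"
      using assms by (auto simp: mrg_def)
    ultimately show "(\<Prod>i\<in>insert a N. p ((z(a:=s)) i)) * kprod F E t (mrg (insert a N) (z(a:=s)) u) =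
        p s * ((\<Prod>i\<in>N. p (z i)) * kprod F E t (mrg N z (u(a:=s))))" by simp
  qed
  also have "\<dots> = (\<Sum>s\<in>{1..r}. p s * gs r p F N E t (u(a:=s)))"
    unfolding gs_def by (simp add: sum_distrib_left)
  finally show ?thesis .
qed

lemma gs_empty: "gs r p F {} E t u = kprod F E t u"
  unfolding gs_def by (simp add: mrg_def)

lemma gs_cong:
  assumes "\<And>i. i \<in> ends E \<Longrightarrow> i \<notin> N \<Longrightarrow> u i = u' i"
  shows "gs r p F N E t u = gs r p F N E t u'"
  unfolding gs_def
  by (intro sum.cong refl arg_cong2[where f="(*)"] kprod_cong) (use assms in \<open>auto simp: mrg_def\<close>)

lemma gs_tcong:
  assumes "\<And>e. e \<in> E \<Longrightarrow> t e = t' e"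
  shows "gs r p F N E t u = gs r p F N E t' u"
  unfolding gs_def
  by (intro sum.cong refl arg_cong2[where f="(*)"] kprod_tcong) (use assms in auto)

lemma gs_noedge:
  assumes "finite N" "(\<Sum>z=1..r. p z) = 1"
  shows "gs r p F N {} t u = 1"
  using assms(1)
proof (induction N arbitrary: u rule: finite_induct)
  case empty
  then show ?case by (simp add: gs_empty kprod_def)
next
  case (insert a N)
  then show ?case using assms(2) by (simp add: gs_ins)
qed

lemma gs_prod:
  assumes "finite N1" "finite N2" "N1 \<inter> N2 = {}" "E1 \<inter> E2 = {}" "finite E1" "finite E2"
    "ends E1 \<inter> N2 = {}" "ends E2 \<inter> N1 = {}"
  shows "gs r p F (N1 \<union> N2) (E1 \<union> E2) t u = gs r p F N1 E1 t u * gs r p F N2 E2 t u"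
  using assms
proof (induction N1 arbitrary: u rule: finite_induct)
  case empty
  have "gs r p F N2 (E1 \<union> E2) t u = (\<Sum>z\<in>N2 \<rightarrow>\<^sub>E {1..r}. kprod F E1 t u * ((\<Prod>i\<in>N2. p (z i)) * kprod F E2 t (mrg N2 z u)))"
    unfolding gs_def
  proof (intro sum.cong refl)
    fix z
    have "kprod F (E1 \<union> E2) t (mrg N2 z u) = kprod F E1 t (mrg N2 z u) * kprod F E2 t (mrg N2 z u)"
      unfolding kprod_def using empty by (simp add: prod.union_disjoint)
    moreover have "kprod F E1 t (mrg N2 z u) = kprod F E1 t u"
      by (rule kprod_cong) (use empty in \<open>auto simp: mrg_def\<close>)
    ultimately show "(\<Prod>i\<in>N2. p (z i)) * kprod F (E1 \<union> E2) t (mrg N2 z u) =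
        kprod F E1 t u * ((\<Prod>i\<in>N2. p (z i)) * kprod F E2 t (mrg N2 z u))" by simp
  qed
  then show ?case by (simp add: gs_empty) (simp add: gs_def sum_distrib_left)
next
  case (insert a N1)
  have aN2: "a \<notin> N1 \<union> N2" using insert by auto
  have "gs r p F (insert a N1 \<union> N2) (E1 \<union> E2) t u = gs r p F (insert a (N1 \<union> N2)) (E1 \<union> E2) t u"
    by simp
  also have "\<dots> = (\<Sum>s\<in>{1..r}. p s * gs r p F (N1 \<union> N2) (E1 \<union> E2) t (u(a:=s)))"
    by (rule gs_ins[OF aN2]) (use insert in auto)
  also have "\<dots> = (\<Sum>s\<in>{1..r}. p s * gs r p F N1 E1 t (u(a:=s)) * gs r p F N2 E2 t u)"
  proof (intro sum.cong refl)
    fix s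
    have "gs r p F N2 E2 t (u(a:=s)) = gs r p F N2 E2 t u"
      by (rule gs_cong) (use insert in auto)
    then show "p s * gs r p F (N1 \<union> N2) (E1 \<union> E2) t (u(a:=s)) = p s * gs r p F N1 E1 t (u(a:=s)) * gs r p F N2 E2 t u"
      using insert by simp
  qed
  also have "\<dots> = gs r p F (insert a N1) E1 t u * gs r p F N2 E2 t u"
    using insert by (simp add: gs_ins sum_distrib_right)
  finally show ?case .
qed

lemma gs_reindex:
  assumes "inj \<pi>" "finite N"
    and "\<And>e. e \<in> E \<Longrightarrow> t' (map_prod \<pi> \<pi> e) = t e"
    and "\<And>i. i \<in> ends E \<Longrightarrow> i \<notin> N \<Longrightarrow> u' (\<pi> i) = u i"
  shows "gs r p F (\<pi> ` N) (map_prod \<pi> \<pi> ` E) t' u' = gs r p F N E t u"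
  using assms(2,4)
proof (induction N arbitrary: u u' rule: finite_induct)
  case empty
  have "kprod F (map_prod \<pi> \<pi> ` E) t' u' = kprod F E t u"
    unfolding kprod_def
    apply (subst prod.reindex)
    apply (rule inj_on_subset[of _ "UNIV"])
    using map_prod_inj_on[OF assms(1) assms(1)] apply simp apply simp
    using assms(3) empty by (intro prod.cong refl) (auto simp: ends_def)
  then show ?case by (simp add: gs_empty)
next
  case (insert a N)
  have pa: "\<pi> a \<notin> \<pi> ` N" using insert assms(1) by (auto dest: injD)
  have "gs r p F (\<pi> ` insert a N) (map_prod \<pi> \<pi> ` E) t' u' =
     (\<Sum>s\<in>{1..r}. p s * gs r p F (\<pi> ` N) (map_prod \<pi> \<pi> ` E) t' (u'(\<pi> a:=s)))"
    using insert by (simp add: gs_ins[OF pa])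
  also have "\<dots> = (\<Sum>s\<in>{1..r}. p s * gs r p F N E t (u(a:=s)))"
  proof (intro sum.cong refl arg_cong2[where f="(*)"] insert.IH)
    fix s i assume "i \<in> ends E" "i \<notin> N"
    then show "(u'(\<pi> a := s)) (\<pi> i) = (u(a := s)) i"
      using insert assms(1) by (cases "i = a") (auto dest: injD)
  qed
  also have "\<dots> = gs r p F (insert a N) E t u"
    by (simp add: gs_ins insert)
  finally show ?case .
qed


lemma gs_lim:
  assumes "finite N" "finite E" "E' \<subseteq> E"
    and RD: "\<forall>a\<in>{1..r}. \<forall>b\<in>{1..r}. real_distribution (F a b)"
    and U: "\<forall>i\<in>ends E. i \<notin> N \<longrightarrow> u i \<in> {1..r}"
  shows "(\<lambda>m. gs r p F N E (\<lambda>e. if e \<in> E' then t e else real m) u) \<longlonglongrightarrow> gs r p F N E' t u"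
  unfolding gs_def
proof (intro tendsto_sum)
  fix z assume z: "z \<in> N \<rightarrow>\<^sub>E {1..r}"
  define w where "w = mrg N z u"
  have wS: "w i \<in> {1..r}" if "i \<in> ends E" for i
    using z U that by (auto simp: w_def mrg_def PiE_mem)
  have split: "kprod F E (\<lambda>e. if e \<in> E' then t e else real m) w =
     kprod F E' t w * (\<Prod>e\<in>E-E'. cdf (F (w (fst e)) (w (snd e))) (real m))" for m
  proof -
    have "kprod F E (\<lambda>e. if e \<in> E' then t e else real m) w =
       (\<Prod>e\<in>E-E'. cdf (F (w (fst e)) (w (snd e))) (if e \<in> E' then t e else real m)) *
       (\<Prod>e\<in>E'. cdf (F (w (fst e)) (w (snd e))) (if e \<in> E' then t e else real m))"
      unfolding kprod_def by (rule prod.subset_diff[OF assms(3,2)])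
    also have "\<dots> = (\<Prod>e\<in>E-E'. cdf (F (w (fst e)) (w (snd e))) (real m)) * kprod F E' t w"
      unfolding kprod_def by (intro arg_cong2[where f="(*)"] prod.cong) auto
    finally show ?thesis by simp
  qed
  have lim: "(\<lambda>m. \<Prod>e\<in>E-E'. cdf (F (w (fst e)) (w (snd e))) (real m)) \<longlonglongrightarrow> (\<Prod>e\<in>E-E'. 1)"
  proof (intro tendsto_prod)
    fix e assume "e \<in> E - E'"
    then have "w (fst e) \<in> {1..r}" "w (snd e) \<in> {1..r}" using wS by (auto simp: ends_def)
    then have "real_distribution (F (w (fst e)) (w (snd e)))" using RD by blast
    then show "(\<lambda>m. cdf (F (w (fst e)) (w (snd e))) (real m)) \<longlonglongrightarrow> 1"
      by (rule real_distribution.cdf_lim_infty_prob)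
  qed
  show "(\<lambda>m. (\<Prod>i\<in>N. p (z i)) * kprod F E (\<lambda>e. if e \<in> E' then t e else real m) (mrg N z u)) \<longlonglongrightarrow>
        (\<Prod>i\<in>N. p (z i)) * kprod F E' t (mrg N z u)"
    unfolding w_def[symmetric] split
    using tendsto_mult[OF tendsto_const lim, of "(\<Prod>i\<in>N. p (z i)) * kprod F E' t w"] by (simp add: mult.assoc)
qed

lemma ep_gs: "wsbm_event_prob r p F n E t (\<lambda>_. True) = gs r p F {..<n} E t (\<lambda>_. undefined)"
  unfolding wsbm_event_prob_def gs_def kprod_def
proof (intro sum.cong refl)
  fix z assume z: "z \<in> {..<n} \<rightarrow>\<^sub>E {1..r}"
  have "mrg {..<n} z (\<lambda>_. undefined) = z"
    using z by (auto simp: mrg_def PiE_def extensional_def)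
  then show "(\<Prod>i<n. p (z i)) * (if True then 1 else 0) * (\<Prod>e\<in>E. cdf (F (z (fst e)) (z (snd e))) (t e)) =
     (\<Prod>i<n. p (z i)) * (\<Prod>e\<in>E. cdf (F (mrg {..<n} z (\<lambda>_. undefined) (fst e)) (mrg {..<n} z (\<lambda>_. undefined) (snd e))) (t e))"
    by simp
qed

lemma ends_star: "ends (star_edges Q) \<subseteq> {..Q}"
  by (auto simp: ends_def star_edges_def)

lemma fq_gs:
  assumes "c \<in> {1..r}" "p c > 0"
  shows "Fq r p F Q c x = gs r p F {1..Q} (star_edges Q) (\<lambda>e. x (snd e)) (\<lambda>_. c)"
proof -
  let ?S = "{1..r}" and ?E = "star_edges Q" and ?t = "\<lambda>e::nat\<times>nat. x (snd e)"
  have ins: "{..<Q+1} = insert 0 {1..Q}" by auto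
  have "wsbm_event_prob r p F (Q + 1) ?E ?t (\<lambda>zz. zz 0 = c) =
     (\<Sum>z\<in>insert 0 {1..Q} \<rightarrow>\<^sub>E ?S. (\<Prod>i\<in>insert 0 {1..Q}. p (z i)) * (if z 0 = c then 1 else 0) * kprod F ?E ?t z)"
    unfolding wsbm_event_prob_def kprod_def ins ..
  also have "\<dots> = (\<Sum>s\<in>?S. \<Sum>z\<in>{1..Q} \<rightarrow>\<^sub>E ?S. (\<Prod>i\<in>insert 0 {1..Q}. p ((z(0:=s)) i)) * (if s = c then 1 else 0) * kprod F ?E ?t (z(0:=s)))"
    by (subst sum_PiE_insert) auto
  also have "\<dots> = (\<Sum>s\<in>?S. if s = c then (\<Sum>z\<in>{1..Q} \<rightarrow>\<^sub>E ?S. p c * ((\<Prod>i\<in>{1..Q}. p (z i)) * kprod F ?E ?t (mrg {1..Q} z (\<lambda>_. c)))) else 0)"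
  proof (intro sum.cong refl)
    fix s assume s: "s \<in> ?S"
    show "(\<Sum>z\<in>{1..Q} \<rightarrow>\<^sub>E ?S. (\<Prod>i\<in>insert 0 {1..Q}. p ((z(0:=s)) i)) * (if s = c then 1 else 0) * kprod F ?E ?t (z(0:=s))) =
      (if s = c then (\<Sum>z\<in>{1..Q} \<rightarrow>\<^sub>E ?S. p c * ((\<Prod>i\<in>{1..Q}. p (z i)) * kprod F ?E ?t (mrg {1..Q} z (\<lambda>_. c)))) else 0)"
    proof (cases "s = c")
      case True
      show ?thesis unfolding True if_True
        apply (simp only: if_P[OF refl])
      proof (intro sum.cong refl)
        fix z assume z: "z \<in> {1..Q} \<rightarrow>\<^sub>E ?S"
        have "(\<Prod>i\<in>{1..Q}. p ((z(0:=c)) i)) = (\<Prod>i\<in>{1..Q}. p (z i))"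
          by (rule prod.cong) auto
        then have P: "(\<Prod>i\<in>insert 0 {1..Q}. p ((z(0:=c)) i)) = p c * (\<Prod>i\<in>{1..Q}. p (z i))"
          by (simp add: prod.insert)
        have K: "kprod F ?E ?t (z(0:=c)) = kprod F ?E ?t (mrg {1..Q} z (\<lambda>_. c))"
          by (rule kprod_cong) (use ends_star[of Q] in \<open>auto simp: mrg_def\<close>)
        show "(\<Prod>i\<in>insert 0 {1..Q}. p ((z(0:=c)) i)) * 1 * kprod F ?E ?t (z(0:=c)) =
           p c * ((\<Prod>i\<in>{1..Q}. p (z i)) * kprod F ?E ?t (mrg {1..Q} z (\<lambda>_. c)))"
          unfolding P K by simp
      qed
    qed simp
  qed
  also have "\<dots> = p c * gs r p F {1..Q} ?E ?t (\<lambda>_. c)"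
    using assms(1) by (simp add: gs_def sum_distrib_left)
  finally show ?thesis unfolding Fq_def using assms(2) by simp
qed



definition lin_indep_on :: "'i set \<Rightarrow> ('i \<Rightarrow> 'd \<Rightarrow> real) \<Rightarrow> bool" where
  "lin_indep_on I f \<longleftrightarrow> (\<forall>c. (\<forall>x. (\<Sum>z\<in>I. c z * f z x) = 0) \<longrightarrow> (\<forall>z\<in>I. c z = 0))"

definition flin :: "(('d \<Rightarrow> real) \<Rightarrow> real) \<Rightarrow> bool" where
  "flin L \<longleftrightarrow> (\<forall>h k \<alpha> \<beta>. L (\<lambda>x. \<alpha> * h x + \<beta> * k x) = \<alpha> * L h + \<beta> * L k)"

lemma flin_zero: "flin L \<Longrightarrow> L (\<lambda>x. 0) = 0"
  unfolding flin_def apply (erule allE[of _ "\<lambda>x. 0"], erule allE[of _ "\<lambda>x. 0"], erule allE[of _ 0], erule allE[of _ 0]) by simp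

lemma flin_sum:
  assumes "flin L" "finite I"
  shows "L (\<lambda>x. \<Sum>z\<in>I. c z * h z x) = (\<Sum>z\<in>I. c z * L (h z))"
  using assms(2)
proof (induction I rule: finite_induct)
  case empty
  then show ?case using flin_zero[OF assms(1)] by simp
next
  case (insert a I)
  have "L (\<lambda>x. \<Sum>z\<in>insert a I. c z * h z x) = L (\<lambda>x. c a * h a x + 1 * (\<Sum>z\<in>I. c z * h z x))"
    using insert by simp
  also have "\<dots> = c a * L (h a) + 1 * L (\<lambda>x. \<Sum>z\<in>I. c z * h z x)"
    by (rule assms(1)[unfolded flin_def, rule_format])
  finally show ?case using insert by simp
qed

lemma sum_delta_mult:
  assumes "finite I" "v \<in> I"
  shows "(\<Sum>c\<in>I. K c * (if v = c then 1 else 0)) = (K v :: real)"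
proof -
  have "(\<Sum>c\<in>I. K c * (if v = c then 1 else 0)) = (\<Sum>c\<in>I. if v = c then K v else 0)"
    by (rule sum.cong) auto
  then show ?thesis using assms by simp
qed

lemma sum_single:
  assumes "finite I" "v \<in> I" "\<And>z. z \<in> I \<Longrightarrow> z \<noteq> v \<Longrightarrow> K z = 0"
  shows "(\<Sum>z\<in>I. K z) = (K v :: real)"
proof -
  have "(\<Sum>z\<in>I. K z) = (\<Sum>z\<in>I. if v = z then K v else 0)"
    by (rule sum.cong) (use assms in auto)
  then show ?thesis using assms by simp
qed

lemma lin_indep_two:
  assumes "lin_indep_on I g" "finite I" "v \<in> I" "v' \<in> I" "v \<noteq> v'"
    and "\<And>x. \<alpha> * g v x + \<beta> * g v' x = 0"
  shows "\<alpha> = 0"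
proof -
  define c where "c = (\<lambda>w. if w = v then \<alpha> else if w = v' then \<beta> else 0)"
  have "(\<Sum>z\<in>I. c z * g z x) = 0" for x
  proof -
    have "(\<Sum>z\<in>I. c z * g z x) = (\<Sum>z\<in>I. (if v = z then \<alpha> * g v x else 0) + (if v' = z then \<beta> * g v' x else 0))"
      by (rule sum.cong) (use assms in \<open>auto simp: c_def\<close>)
    also have "\<dots> = \<alpha> * g v x + \<beta> * g v' x"
      using assms by (simp add: sum.distrib)
    finally show ?thesis using assms by simp
  qed
  then have "c v = 0" using assms(1,3) unfolding lin_indep_on_def by blast
  then show ?thesis by (simp add: c_def)
qed

lemma lin_indep_subset:
  assumes "lin_indep_on (insert a J) f" "a \<notin> J" "finite J"
  shows "lin_indep_on J f"
  unfolding lin_indep_on_def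
proof (intro allI impI)
  fix c assume H: "\<forall>x. (\<Sum>z\<in>J. c z * f z x) = 0"
  have "(\<Sum>z\<in>insert a J. (c(a:=0)) z * f z x) = 0" for x
  proof -
    have "(\<Sum>z\<in>J. (c(a:=0)) z * f z x) = (\<Sum>z\<in>J. c z * f z x)"
      by (rule sum.cong) (use assms in auto)
    then show ?thesis using assms H by simp
  qed
  then have "\<forall>z\<in>insert a J. (c(a:=0)) z = 0" using assms(1) unfolding lin_indep_on_def by blast
  then show "\<forall>z\<in>J. c z = 0" using assms(2) by (metis fun_upd_other insertCI)
qed

lemma duals:
  assumes "finite I"
  shows "lin_indep_on I f \<Longrightarrow> \<exists>\<phi>. (\<forall>a\<in>I. flin (\<phi> a)) \<and> (\<forall>a\<in>I. \<forall>b\<in>I. \<phi> a (f b) = (if a = b then 1 else 0))"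
  using assms
proof (induction I rule: finite_induct)
  case empty
  then show ?case by auto
next
  case (insert a J)
  have liJ: "lin_indep_on J f" by (rule lin_indep_subset) (use insert in auto)
  obtain \<psi> where \<psi>lin: "\<forall>b\<in>J. flin (\<psi> b)" and \<psi>d: "\<forall>b\<in>J. \<forall>b'\<in>J. \<psi> b (f b') = (if b = b' then 1 else 0)"
    using insert.IH[OF liJ] by blast
  define h where "h = (\<lambda>x. f a x - (\<Sum>b\<in>J. \<psi> b (f a) * f b x))"
  have "\<exists>y. h y \<noteq> 0"
  proof (rule ccontr)
    assume "\<not> (\<exists>y. h y \<noteq> 0)"
    then have h0: "h y = 0" for y by blast
    define c where "c = (\<lambda>z. if z = a then 1 else - \<psi> z (f a))"
    have "(\<Sum>z\<in>insert a J. c z * f z x) = 0" for x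
    proof -
      have "(\<Sum>z\<in>J. c z * f z x) = (\<Sum>z\<in>J. - (\<psi> z (f a) * f z x))"
        by (rule sum.cong) (use insert in \<open>auto simp: c_def\<close>)
      then show ?thesis using insert h0[of x] by (simp add: c_def h_def sum_negf)
    qed
    then have "c a = 0" using insert.prems unfolding lin_indep_on_def by blast
    then show False by (simp add: c_def)
  qed
  then obtain y where hy: "h y \<noteq> 0" by blast
  define \<theta> where "\<theta> = (\<lambda>k. (k y - (\<Sum>b\<in>J. f b y * \<psi> b k)) / h y)"
  have \<theta>lin: "flin \<theta>"
    unfolding flin_def
  proof (intro allI)
    fix k1 k2 :: "'b \<Rightarrow> real" and \<alpha> \<beta> :: real
    have "(\<Sum>b\<in>J. f b y * \<psi> b (\<lambda>x. \<alpha> * k1 x + \<beta> * k2 x)) = (\<Sum>b\<in>J. \<alpha> * (f b y * \<psi> b k1) + \<beta> * (f b y * \<psi> b k2))"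
      by (rule sum.cong) (use \<psi>lin in \<open>auto simp: flin_def algebra_simps\<close>)
    also have "\<dots> = \<alpha> * (\<Sum>b\<in>J. f b y * \<psi> b k1) + \<beta> * (\<Sum>b\<in>J. f b y * \<psi> b k2)"
      by (simp add: sum.distrib sum_distrib_left)
    finally show "\<theta> (\<lambda>x. \<alpha> * k1 x + \<beta> * k2 x) = \<alpha> * \<theta> k1 + \<beta> * \<theta> k2"
      unfolding \<theta>_def using hy by (simp add: field_simps)
  qed
  have \<theta>J: "\<theta> (f b') = 0" if "b' \<in> J" for b'
  proof -
    have "(\<Sum>b\<in>J. f b y * \<psi> b (f b')) = (\<Sum>b\<in>J. if b = b' then f b' y else 0)"
      by (rule sum.cong) (use \<psi>d that in auto)
    then show ?thesis unfolding \<theta>_def using that insert by simp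
  qed
  have \<theta>a: "\<theta> (f a) = 1"
  proof -
    have "(\<Sum>b\<in>J. f b y * \<psi> b (f a)) = (\<Sum>b\<in>J. \<psi> b (f a) * f b y)"
      by (simp add: mult.commute)
    then show ?thesis unfolding \<theta>_def using hy by (simp add: h_def)
  qed
  define \<phi> where "\<phi> = (\<lambda>z. if z = a then \<theta> else (\<lambda>k. \<psi> z k - \<psi> z (f a) * \<theta> k))"
  have "\<forall>z\<in>insert a J. flin (\<phi> z)"
  proof
    fix z assume z: "z \<in> insert a J"
    show "flin (\<phi> z)"
    proof (cases "z = a")
      case True
      then show ?thesis using \<theta>lin by (simp add: \<phi>_def)
    next
      case False
      then have "z \<in> J" using z by simp
      then show ?thesis using False \<psi>lin \<theta>lin unfolding \<phi>_def flin_def by (simp add: algebra_simps)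
    qed
  qed
  moreover have "\<forall>z\<in>insert a J. \<forall>b\<in>insert a J. \<phi> z (f b) = (if z = b then 1 else 0)"
  proof (intro ballI)
    fix z b assume z: "z \<in> insert a J" and b: "b \<in> insert a J"
    show "\<phi> z (f b) = (if z = b then 1 else 0)"
    proof (cases "z = a")
      case True
      then show ?thesis using \<theta>J \<theta>a b insert.hyps(2) by (cases "b = a") (auto simp: \<phi>_def)
    next
      case False
      then have zJ: "z \<in> J" using z by simp
      show ?thesis
      proof (cases "b = a")
        case True
        then show ?thesis using False \<theta>a by (simp add: \<phi>_def)
      next
        case bF: False
        then have "b \<in> J" using b by simp
        then show ?thesis using False bF zJ \<theta>J \<psi>d by (simp add: \<phi>_def)
      qed
    qed
  qed
  ultimately show ?case by blast
qed



lemma flin_scale: "flin L \<Longrightarrow> L (\<lambda>x. \<alpha> * h x) = \<alpha> * L h"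
  unfolding flin_def apply (erule allE[of _ h], erule allE[of _ h], erule allE[of _ \<alpha>], erule allE[of _ 0]) by simp

lemma ident:
  fixes f g :: "nat \<Rightarrow> 'd \<Rightarrow> real" and p p' :: "nat \<Rightarrow> real"
  assumes fin: "finite S" "finite S'"
    and li: "lin_indep_on S f" "lin_indep_on S' g"
    and pp: "\<forall>z\<in>S. p z > 0" "\<forall>z\<in>S'. p' z > 0"
    and H2: "\<And>x y. (\<Sum>c\<in>S. p c * (f c x * f c y)) = (\<Sum>c\<in>S'. p' c * (g c x * g c y))"
    and H3: "\<And>x y w. (\<Sum>c\<in>S. p c * (f c x * (f c y * f c w))) = (\<Sum>c\<in>S'. p' c * (g c x * (g c y * g c w)))"
  shows "\<exists>\<tau>. bij_betw \<tau> S' S \<and> (\<forall>v\<in>S'. g v = f (\<tau> v) \<and> p' v = p (\<tau> v))"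
proof -
  obtain \<phi> where \<phi>lin: "\<forall>a\<in>S. flin (\<phi> a)" and \<phi>d: "\<forall>a\<in>S. \<forall>b\<in>S. \<phi> a (f b) = (if a = b then 1 else 0)"
    using duals[OF fin(1) li(1)] by blast
  obtain \<psi> where \<psi>lin: "\<forall>a\<in>S'. flin (\<psi> a)" and \<psi>d: "\<forall>a\<in>S'. \<forall>b\<in>S'. \<psi> a (g b) = (if a = b then 1 else 0)"
    using duals[OF fin(2) li(2)] by blast
  define \<mu> where "\<mu> v z = p z * \<psi> v (f z) / p' v" for v z
  have g_exp: "g v x = (\<Sum>z\<in>S. \<mu> v z * f z x)" if v: "v \<in> S'" for v x
  proof -
    have eq: "(\<lambda>y. \<Sum>c\<in>S. (p c * f c x) * f c y) = (\<lambda>y. \<Sum>c\<in>S'. (p' c * g c x) * g c y)"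
      by (rule ext) (simp add: mult.assoc H2)
    have "\<psi> v (\<lambda>y. \<Sum>c\<in>S. (p c * f c x) * f c y) = (\<Sum>c\<in>S. (p c * f c x) * \<psi> v (f c))"
      by (rule flin_sum) (use \<psi>lin v fin in auto)
    moreover have "\<psi> v (\<lambda>y. \<Sum>c\<in>S'. (p' c * g c x) * g c y) = (\<Sum>c\<in>S'. (p' c * g c x) * \<psi> v (g c))"
      by (rule flin_sum) (use \<psi>lin v fin in auto)
    moreover have "(\<Sum>c\<in>S'. (p' c * g c x) * \<psi> v (g c)) = (\<Sum>c\<in>S'. (p' c * g c x) * (if v = c then 1 else 0))"
      by (rule sum.cong) (use \<psi>d v in auto)
    moreover have "\<dots> = p' v * g v x" by (rule sum_delta_mult) (use fin v in auto)
    ultimately have A: "p' v * g v x = (\<Sum>c\<in>S. (p c * f c x) * \<psi> v (f c))" using eq by metis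
    have "(\<Sum>z\<in>S. \<mu> v z * f z x) = (\<Sum>z\<in>S. (p z * f z x) * \<psi> v (f z) / p' v)"
      by (rule sum.cong) (auto simp: \<mu>_def)
    also have "\<dots> = (\<Sum>z\<in>S. (p z * f z x) * \<psi> v (f z)) / p' v"
      by (simp add: sum_divide_distrib)
    also have "\<dots> = g v x"
    proof -
      have "p' v \<noteq> 0" using pp v by auto
      then show ?thesis unfolding A[symmetric] by simp
    qed
    finally show ?thesis by simp
  qed
  have \<phi>g: "\<phi> a (g v) = \<mu> v a" if a: "a \<in> S" and v: "v \<in> S'" for a v
  proof -
    have "g v = (\<lambda>x. \<Sum>z\<in>S. \<mu> v z * f z x)" using g_exp v by auto
    then have "\<phi> a (g v) = (\<Sum>z\<in>S. \<mu> v z * \<phi> a (f z))"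
      using flin_sum[of "\<phi> a" S "\<mu> v" f] \<phi>lin a fin by auto
    also have "\<dots> = (\<Sum>z\<in>S. \<mu> v z * (if a = z then 1 else 0))"
      by (rule sum.cong) (use \<phi>d a in auto)
    also have "\<dots> = \<mu> v a" by (rule sum_delta_mult) (use fin a in auto)
    finally show ?thesis .
  qed
  have E3: "(\<Sum>c\<in>S'. (p' c * \<mu> c a * \<mu> c b) * g c x) = (if a = b then p b * f b x else 0)"
    if a: "a \<in> S" and b: "b \<in> S" for a b x
  proof -
    have stepA: "p b * f b x * f b y = (\<Sum>c\<in>S'. (p' c * g c x * \<mu> c b) * g c y)" for y
    proof -
      have eq: "(\<lambda>w. \<Sum>c\<in>S. (p c * f c x * f c y) * f c w) = (\<lambda>w. \<Sum>c\<in>S'. (p' c * g c x * g c y) * g c w)"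
        by (rule ext) (simp add: mult.assoc H3)
      have "\<phi> b (\<lambda>w. \<Sum>c\<in>S. (p c * f c x * f c y) * f c w) = (\<Sum>c\<in>S. (p c * f c x * f c y) * \<phi> b (f c))"
        by (rule flin_sum) (use \<phi>lin b fin in auto)
      also have "\<dots> = (\<Sum>c\<in>S. (p c * f c x * f c y) * (if b = c then 1 else 0))"
        by (rule sum.cong) (use \<phi>d b in auto)
      also have "\<dots> = p b * f b x * f b y" by (rule sum_delta_mult) (use fin b in auto)
      finally have L: "\<phi> b (\<lambda>w. \<Sum>c\<in>S. (p c * f c x * f c y) * f c w) = p b * f b x * f b y" .
      have "\<phi> b (\<lambda>w. \<Sum>c\<in>S'. (p' c * g c x * g c y) * g c w) = (\<Sum>c\<in>S'. (p' c * g c x * g c y) * \<phi> b (g c))"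
        by (rule flin_sum) (use \<phi>lin b fin in auto)
      also have "\<dots> = (\<Sum>c\<in>S'. (p' c * g c x * \<mu> c b) * g c y)"
        by (rule sum.cong) (use \<phi>g b in auto)
      finally show ?thesis using L eq by metis
    qed
    have eq2: "(\<lambda>y. (p b * f b x) * f b y) = (\<lambda>y. \<Sum>c\<in>S'. (p' c * g c x * \<mu> c b) * g c y)"
      by (rule ext) (simp add: stepA)
    have "\<phi> a (\<lambda>y. (p b * f b x) * f b y) = (p b * f b x) * (if a = b then 1 else 0)"
      using flin_scale[of "\<phi> a" "p b * f b x" "f b"] \<phi>lin \<phi>d a b by auto
    moreover have "\<phi> a (\<lambda>y. \<Sum>c\<in>S'. (p' c * g c x * \<mu> c b) * g c y) = (\<Sum>c\<in>S'. (p' c * g c x * \<mu> c b) * \<phi> a (g c))"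
      by (rule flin_sum) (use \<phi>lin a fin in auto)
    moreover have "\<dots> = (\<Sum>c\<in>S'. (p' c * \<mu> c a * \<mu> c b) * g c x)"
      by (rule sum.cong) (use \<phi>g a in auto)
    ultimately show ?thesis using eq2 by (simp split: if_splits)
  qed
  have E2: "p a = (\<Sum>c\<in>S'. p' c * \<mu> c a * \<mu> c a)" if a: "a \<in> S" for a
  proof -
    have s1: "p a * f a x = (\<Sum>c\<in>S'. (p' c * \<mu> c a) * g c x)" for x
    proof -
      have eq: "(\<lambda>y. \<Sum>c\<in>S. (p c * f c x) * f c y) = (\<lambda>y. \<Sum>c\<in>S'. (p' c * g c x) * g c y)"
        by (rule ext) (simp add: mult.assoc H2)
      have "\<phi> a (\<lambda>y. \<Sum>c\<in>S. (p c * f c x) * f c y) = (\<Sum>c\<in>S. (p c * f c x) * \<phi> a (f c))"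
        by (rule flin_sum) (use \<phi>lin a fin in auto)
      also have "\<dots> = (\<Sum>c\<in>S. (p c * f c x) * (if a = c then 1 else 0))"
        by (rule sum.cong) (use \<phi>d a in auto)
      also have "\<dots> = p a * f a x" by (rule sum_delta_mult) (use fin a in auto)
      finally have L: "\<phi> a (\<lambda>y. \<Sum>c\<in>S. (p c * f c x) * f c y) = p a * f a x" .
      have "\<phi> a (\<lambda>y. \<Sum>c\<in>S'. (p' c * g c x) * g c y) = (\<Sum>c\<in>S'. (p' c * g c x) * \<phi> a (g c))"
        by (rule flin_sum) (use \<phi>lin a fin in auto)
      also have "\<dots> = (\<Sum>c\<in>S'. (p' c * \<mu> c a) * g c x)"
        by (rule sum.cong) (use \<phi>g a in auto)
      finally show ?thesis using L eq by metis
    qed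
    have eq2: "(\<lambda>x. p a * f a x) = (\<lambda>x. \<Sum>c\<in>S'. (p' c * \<mu> c a) * g c x)"
      by (rule ext) (simp add: s1)
    have "\<phi> a (\<lambda>x. p a * f a x) = p a"
      using flin_scale[of "\<phi> a" "p a" "f a"] \<phi>lin \<phi>d a by auto
    moreover have "\<phi> a (\<lambda>x. \<Sum>c\<in>S'. (p' c * \<mu> c a) * g c x) = (\<Sum>c\<in>S'. (p' c * \<mu> c a) * \<phi> a (g c))"
      by (rule flin_sum) (use \<phi>lin a fin in auto)
    moreover have "\<dots> = (\<Sum>c\<in>S'. p' c * \<mu> c a * \<mu> c a)"
      by (rule sum.cong) (use \<phi>g a in auto)
    ultimately show ?thesis using eq2 by simp
  qed
  have E3': "p a = (\<Sum>c\<in>S'. p' c * \<mu> c a * \<mu> c a * \<mu> c a)" if a: "a \<in> S" for a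
  proof -
    have eq2: "(\<lambda>x. p a * f a x) = (\<lambda>x. \<Sum>c\<in>S'. (p' c * \<mu> c a * \<mu> c a) * g c x)"
      by (rule ext) (simp add: E3[OF a a])
    have "\<phi> a (\<lambda>x. p a * f a x) = p a"
      using flin_scale[of "\<phi> a" "p a" "f a"] \<phi>lin \<phi>d a by auto
    moreover have "\<phi> a (\<lambda>x. \<Sum>c\<in>S'. (p' c * \<mu> c a * \<mu> c a) * g c x) = (\<Sum>c\<in>S'. (p' c * \<mu> c a * \<mu> c a) * \<phi> a (g c))"
      by (rule flin_sum) (use \<phi>lin a fin in auto)
    moreover have "\<dots> = (\<Sum>c\<in>S'. p' c * \<mu> c a * \<mu> c a * \<mu> c a)"
      by (rule sum.cong) (use \<phi>g a in auto)
    ultimately show ?thesis using eq2 by simp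
  qed
  have zero: "\<mu> v a * \<mu> v b = 0" if "a \<in> S" "b \<in> S" "a \<noteq> b" "v \<in> S'" for a b v
  proof -
    have "\<forall>x. (\<Sum>c\<in>S'. (p' c * \<mu> c a * \<mu> c b) * g c x) = 0" using E3 that by simp
    then have "p' v * \<mu> v a * \<mu> v b = 0"
      using li(2)[unfolded lin_indep_on_def, rule_format, of "\<lambda>c. p' c * \<mu> c a * \<mu> c b"] that(4) by blast
    then show ?thesis using pp that(4) by auto
  qed
  have nz: "\<exists>a\<in>S. \<mu> v a \<noteq> 0" if v: "v \<in> S'" for v
  proof (rule ccontr)
    assume "\<not> (\<exists>a\<in>S. \<mu> v a \<noteq> 0)"
    then have g0: "g v x = 0" for x using g_exp[OF v, of x] by simp
    define c where "c = (\<lambda>w. if w = v then 1 else (0::real))"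
    have "(\<Sum>w\<in>S'. c w * g w x) = 0" for x
    proof -
      have "(\<Sum>w\<in>S'. c w * g w x) = c v * g v x" by (rule sum_single) (use fin v in \<open>auto simp: c_def\<close>)
      then show ?thesis using g0 by simp
    qed
    then have "c v = 0" using li(2)[unfolded lin_indep_on_def, rule_format, of c] v by blast
    then show False by (simp add: c_def)
  qed
  define \<tau> where "\<tau> v = (SOME a. a \<in> S \<and> \<mu> v a \<noteq> 0)" for v
  have \<tau>S: "\<tau> v \<in> S \<and> \<mu> v (\<tau> v) \<noteq> 0" if "v \<in> S'" for v
    unfolding \<tau>_def using someI_ex[OF nz[OF that, unfolded Bex_def]] .
  have \<mu>0: "\<mu> v a = 0" if "v \<in> S'" "a \<in> S" "a \<noteq> \<tau> v" for v a
    using zero[of a "\<tau> v" v] \<tau>S[of v] that by auto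
  have g_single: "g v x = \<mu> v (\<tau> v) * f (\<tau> v) x" if v: "v \<in> S'" for v x
    unfolding g_exp[OF v] by (rule sum_single) (use fin \<tau>S \<mu>0 v in auto)
  have inj: "inj_on \<tau> S'"
  proof (rule inj_onI, rule ccontr)
    fix v v' assume v: "v \<in> S'" and v': "v' \<in> S'" and eq: "\<tau> v = \<tau> v'" and ne: "v \<noteq> v'"
    have "\<mu> v' (\<tau> v) * g v x + (- \<mu> v (\<tau> v)) * g v' x = 0" for x
      using g_single[OF v, of x] g_single[OF v', of x] eq by simp
    then have "\<mu> v' (\<tau> v) = 0" by (rule lin_indep_two[OF li(2) fin(2) v v' ne])
    then show False using \<tau>S[OF v'] eq by simp
  qed
  have surj: "\<exists>v\<in>S'. \<tau> v = a" if a: "a \<in> S" for a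
  proof (rule ccontr)
    assume "\<not> (\<exists>v\<in>S'. \<tau> v = a)"
    then have "\<forall>c\<in>S'. \<mu> c a = 0" using \<mu>0 a by metis
    then have "p a = 0" using E2[OF a] by simp
    then show False using pp a by auto
  qed
  have img: "\<tau> ` S' = S" using \<tau>S surj by blast
  have main: "g v = f (\<tau> v) \<and> p' v = p (\<tau> v)" if v: "v \<in> S'" for v
  proof -
    define a where "a = \<tau> v"
    define m where "m = \<mu> v a"
    have aS: "a \<in> S" and mnz: "m \<noteq> 0" using \<tau>S[OF v] by (auto simp: a_def m_def)
    have oth: "\<mu> c a = 0" if "c \<in> S'" "c \<noteq> v" for c
    proof -
      have "\<tau> c \<noteq> a" using inj that v unfolding a_def by (auto dest: inj_onD)
      then show ?thesis using \<mu>0 that aS by auto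
    qed
    have e2: "p a = p' v * m * m"
      unfolding E2[OF aS] m_def by (rule sum_single) (use fin v oth in auto)
    have e3: "p a = p' v * m * m * m"
      unfolding E3'[OF aS] m_def by (rule sum_single) (use fin v oth in auto)
    have "p' v * m * m \<noteq> 0" using pp v mnz by auto
    then have m1: "m = 1" using e2 e3
      by (metis mult.right_neutral mult_left_cancel)
    show ?thesis
    proof
      show "g v = f (\<tau> v)" using g_single[OF v] m1 by (auto simp: m_def a_def)
      show "p' v = p (\<tau> v)" using e2 m1 by (simp add: a_def)
    qed
  qed
  show ?thesis using inj img main unfolding bij_betw_def by blast
qed



lemma finite_all_pairs: "finite (all_pairs n)"
proof -
  have "all_pairs n \<subseteq> {..<n} \<times> {..<n}" by (auto simp: all_pairs_def)
  then show ?thesis by (rule finite_subset) auto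
qed

lemma ends_all_pairs: "ends (all_pairs n) \<subseteq> {..<n}"
  by (auto simp: ends_def all_pairs_def)

lemma marginal:
  assumes RD: "\<forall>a\<in>{1..r}. \<forall>b\<in>{1..r}. real_distribution (F a b)"
    and RD': "\<forall>a\<in>{1..r'}. \<forall>b\<in>{1..r'}. real_distribution (F' a b)"
    and H: "\<forall>n t. wsbm_joint_cdf r p F n t = wsbm_joint_cdf r' p' F' n t"
    and E: "E \<subseteq> all_pairs n"
  shows "gs r p F {..<n} E t (\<lambda>_. undefined) = gs r' p' F' {..<n} E t (\<lambda>_. undefined)"
proof -
  let ?tm = "\<lambda>m::nat. (\<lambda>e. if e \<in> E then t e else real m)"
  have U: "\<forall>i\<in>ends (all_pairs n). i \<notin> {..<n} \<longrightarrow> (\<lambda>_. undefined) i \<in> {1..r}" for r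
    using ends_all_pairs[of n] by blast
  have L1: "(\<lambda>m. gs r p F {..<n} (all_pairs n) (?tm m) (\<lambda>_. undefined)) \<longlonglongrightarrow> gs r p F {..<n} E t (\<lambda>_. undefined)"
    by (rule gs_lim[OF _ finite_all_pairs E RD U]) auto
  have L2: "(\<lambda>m. gs r' p' F' {..<n} (all_pairs n) (?tm m) (\<lambda>_. undefined)) \<longlonglongrightarrow> gs r' p' F' {..<n} E t (\<lambda>_. undefined)"
    by (rule gs_lim[OF _ finite_all_pairs E RD' U]) auto
  have eq: "gs r p F {..<n} (all_pairs n) (?tm m) (\<lambda>_. undefined) = gs r' p' F' {..<n} (all_pairs n) (?tm m) (\<lambda>_. undefined)" for m
    using H[rule_format, of n "?tm m"] unfolding wsbm_joint_cdf_def ep_gs .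
  have "(\<lambda>m. gs r' p' F' {..<n} (all_pairs n) (?tm m) (\<lambda>_. undefined)) \<longlonglongrightarrow> gs r p F {..<n} E t (\<lambda>_. undefined)"
    using L1 unfolding eq .
  then show ?thesis using L2 by (rule LIMSEQ_unique)
qed

definition pl :: "nat \<Rightarrow> nat \<Rightarrow> nat \<Rightarrow> nat" where
  "pl c0 b i = (if i = 0 then c0 else i + b - 1)"

lemma inj_pl: "c0 < b \<Longrightarrow> inj (pl c0 b)"
  by (auto intro!: injI simp: pl_def split: if_splits)

lemma pl_image: "1 \<le> b \<Longrightarrow> pl c0 b ` {1..Q} = {b..<b+Q}"
proof -
  assume b: "1 \<le> b"
  have "pl c0 b ` {1..Q} = (\<lambda>i. i + (b - 1)) ` {1..Q}"
    by (rule image_cong) (use b in \<open>auto simp: pl_def\<close>)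
  also have "\<dots> = {1 + (b - 1)..Q + (b - 1)}" by (rule image_add_atLeastAtMost')
  also have "\<dots> = {b..<b+Q}" using b by (simp add: atLeastLessThanSuc_atLeastAtMost[symmetric] add.commute)
  finally show ?thesis .
qed

lemma place:
  assumes "c0 < b" "c \<in> {1..r}" "p c > 0" "u c0 = c"
    and T: "\<And>e. e \<in> star_edges Q \<Longrightarrow> t (map_prod (pl c0 b) (pl c0 b) e) = x (snd e)"
  shows "gs r p F (pl c0 b ` {1..Q}) (map_prod (pl c0 b) (pl c0 b) ` star_edges Q) t u = Fq r p F Q c x"
proof -
  have "gs r p F (pl c0 b ` {1..Q}) (map_prod (pl c0 b) (pl c0 b) ` star_edges Q) t u =
        gs r p F {1..Q} (star_edges Q) (\<lambda>e. x (snd e)) (\<lambda>_. c)"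
  proof (rule gs_reindex[OF inj_pl[OF assms(1)]])
    fix i assume "i \<in> ends (star_edges Q)" "i \<notin> {1..Q}"
    then have "i = 0" using ends_star[of Q] by auto
    then show "u (pl c0 b i) = c" using assms(4) by (simp add: pl_def)
  qed (use T in auto)
  also have "\<dots> = Fq r p F Q c x" using fq_gs[where c=c and r=r and p=p, OF assms(2,3)] by simp
  finally show ?thesis .
qed

definition sN :: "nat \<Rightarrow> nat \<Rightarrow> nat set" where
  "sN Q j = pl 0 (1 + j * Q) ` {1..Q}"
definition sE :: "nat \<Rightarrow> nat \<Rightarrow> (nat \<times> nat) set" where
  "sE Q j = map_prod (pl 0 (1 + j * Q)) (pl 0 (1 + j * Q)) ` star_edges Q"

lemma sN_eq: "sN Q j = {1 + j * Q..<1 + j * Q + Q}"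
  unfolding sN_def by (rule pl_image) simp

lemma star_snd: "e \<in> star_edges Q \<Longrightarrow> 1 \<le> snd e \<and> snd e \<le> Q \<and> fst e < snd e \<and> fst e \<le> 1"
  by (auto simp: star_edges_def)

lemma finite_star: "finite (star_edges Q)"
proof -
  have "star_edges Q \<subseteq> {..Q} \<times> {..Q}" by (auto simp: star_edges_def)
  then show ?thesis by (rule finite_subset) auto
qed

lemma sE_ends: "ends (sE Q j) \<subseteq> insert 0 (sN Q j)"
proof
  fix i assume "i \<in> ends (sE Q j)"
  then obtain k where k: "k \<in> ends (star_edges Q)" and i: "i = pl 0 (1 + j * Q) k"
    unfolding ends_def sE_def by (auto simp: image_iff)
  have "k \<le> Q" using k ends_star[of Q] by auto
  then show "i \<in> insert 0 (sN Q j)"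
  proof (cases "k = 0")
    case True
    then show ?thesis using i by (simp add: pl_def)
  next
    case False
    then have "k \<in> {1..Q}" using \<open>k \<le> Q\<close> by auto
    then show ?thesis using i unfolding sN_def by blast
  qed
qed

lemma sE_snd: "e \<in> sE Q j \<Longrightarrow> snd e \<in> sN Q j"
proof -
  assume "e \<in> sE Q j"
  then obtain e' where e': "e' \<in> star_edges Q" "e = map_prod (pl 0 (1 + j * Q)) (pl 0 (1 + j * Q)) e'"
    unfolding sE_def by (auto simp: image_iff)
  have "snd e' \<in> {1..Q}" using star_snd[OF e'(1)] by auto
  then show ?thesis using e'(2) unfolding sN_def by (cases e') simp
qed

lemma sE_lt: "e \<in> sE Q j \<Longrightarrow> fst e < snd e"
proof -
  assume "e \<in> sE Q j"
  then obtain e' where e': "e' \<in> star_edges Q" "e = map_prod (pl 0 (1 + j * Q)) (pl 0 (1 + j * Q)) e'"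
    unfolding sE_def by (auto simp: image_iff)
  have "fst e' < snd e'" "1 \<le> snd e'" using star_snd[OF e'(1)] by auto
  then show ?thesis using e'(2) by (cases e') (simp add: pl_def)
qed

lemma multi:
  "gs r p F {1..<1 + m * Q} (\<Union>j<m. sE Q j) t u = (\<Prod>j<m. gs r p F (sN Q j) (sE Q j) t u)"
proof (induction m)
  case 0
  have "gs r p F {} {} t u = 1" by (simp add: gs_empty kprod_def)
  then show ?case by simp
next
  case (Suc m)
  have N: "{1..<1 + Suc m * Q} = {1..<1 + m * Q} \<union> sN Q m"
    unfolding sN_eq by auto
  have E: "(\<Union>j<Suc m. sE Q j) = (\<Union>j<m. sE Q j) \<union> sE Q m"
    by (auto simp: lessThan_Suc)
  have snd_lt: "snd e < 1 + m * Q" if e_in: "e \<in> (\<Union>j<m. sE Q j)" for e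
  proof -
    obtain j where j: "j < m" "e \<in> sE Q j" using e_in by blast
    have "snd e < 1 + j * Q + Q" using sE_snd[OF j(2)] sN_eq by auto
    also have "\<dots> \<le> 1 + m * Q"
    proof -
      have "Suc j * Q \<le> m * Q" using j(1) by (intro mult_le_mono1) simp
      then show ?thesis by simp
    qed
    finally show ?thesis .
  qed
  have ends1: "ends (\<Union>j<m. sE Q j) \<subseteq> {..<1 + m * Q}"
  proof
    fix i assume "i \<in> ends (\<Union>j<m. sE Q j)"
    then obtain e where e: "e \<in> (\<Union>j<m. sE Q j)" "i = fst e \<or> i = snd e" unfolding ends_def by auto
    obtain j where j: "j < m" "e \<in> sE Q j" using e(1) by blast
    have "fst e < snd e" using sE_lt[OF j(2)] .
    then show "i \<in> {..<1 + m * Q}" using snd_lt[OF e(1)] e(2) by auto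
  qed
  have fin: "finite (\<Union>j<m. sE Q j)" unfolding sE_def using finite_star by auto
  have "gs r p F ({1..<1 + m * Q} \<union> sN Q m) ((\<Union>j<m. sE Q j) \<union> sE Q m) t u =
        gs r p F {1..<1 + m * Q} (\<Union>j<m. sE Q j) t u * gs r p F (sN Q m) (sE Q m) t u"
  proof (rule gs_prod)
    show "{1..<1 + m * Q} \<inter> sN Q m = {}" unfolding sN_eq by auto
    show "(\<Union>j<m. sE Q j) \<inter> sE Q m = {}"
    proof (intro equals0I)
      fix e assume "e \<in> (\<Union>j<m. sE Q j) \<inter> sE Q m"
      then have "snd e < 1 + m * Q" "snd e \<in> sN Q m" using snd_lt sE_snd by blast+
      then show False unfolding sN_eq by simp
    qed
    show "ends (\<Union>j<m. sE Q j) \<inter> sN Q m = {}" using ends1 unfolding sN_eq by auto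
    show "ends (sE Q m) \<inter> {1..<1 + m * Q} = {}" using sE_ends[of Q m] unfolding sN_eq by auto
    show "finite (sE Q m)" unfolding sE_def using finite_star by auto
  qed (use fin in \<open>simp_all add: sN_eq\<close>)
  then show ?case using Suc N E by simp
qed


lemma pl_edge:
  assumes "e \<in> star_edges Q" "c0 < b" "1 \<le> b"
  shows "fst (map_prod (pl c0 b) (pl c0 b) e) < snd (map_prod (pl c0 b) (pl c0 b) e)"
    "snd (map_prod (pl c0 b) (pl c0 b) e) = snd e + b - 1"
    "fst (map_prod (pl c0 b) (pl c0 b) e) = c0 \<or> fst (map_prod (pl c0 b) (pl c0 b) e) = b"
    "b \<le> snd (map_prod (pl c0 b) (pl c0 b) e)" "snd (map_prod (pl c0 b) (pl c0 b) e) < b + Q"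
  using assms by (cases e; auto simp: star_edges_def pl_def)+

lemma pl_ends:
  assumes "c0 < b" "1 \<le> b"
  shows "ends (map_prod (pl c0 b) (pl c0 b) ` star_edges Q) \<subseteq> insert c0 {b..<b+Q}"
proof
  fix i assume "i \<in> ends (map_prod (pl c0 b) (pl c0 b) ` star_edges Q)"
  then obtain e where e: "e \<in> star_edges Q" and
    i: "i = fst (map_prod (pl c0 b) (pl c0 b) e) \<or> i = snd (map_prod (pl c0 b) (pl c0 b) e)"
    unfolding ends_def by auto
  show "i \<in> insert c0 {b..<b+Q}"
    using pl_edge[OF e assms] i star_snd[OF e] by auto
qed

lemma div_helper:
  fixes k j Q :: nat
  assumes "1 \<le> k" "k \<le> Q"
  shows "(k + (1 + j * Q) - 1 - 1) div Q = j" "(k + (1 + j * Q) - 1 - 1) mod Q + 1 = k"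
proof -
  have e: "k + (1 + j * Q) - 1 - 1 = (k - 1) + j * Q" using assms by simp
  have Q: "0 < Q" "k - 1 < Q" using assms by auto
  show "(k + (1 + j * Q) - 1 - 1) div Q = j" unfolding e using Q by simp
  have "((k - 1) + j * Q) mod Q = k - 1" unfolding mod_mult_self1 using Q by simp
  then show "(k + (1 + j * Q) - 1 - 1) mod Q + 1 = k" unfolding e using assms by simp
qed

definition tX :: "nat \<Rightarrow> (nat \<Rightarrow> nat \<Rightarrow> real) \<Rightarrow> nat \<times> nat \<Rightarrow> real" where
  "tX Q X e = X ((snd e - 1) div Q) ((snd e - 1) mod Q + 1)"

lemma star_ident:
  assumes M: "wsbm_model r p F" and Q: "1 \<le> Q"
  shows "gs r p F {..<1 + m * Q} (\<Union>j<m. sE Q j) (tX Q X) (\<lambda>_. undefined) =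
         (\<Sum>s\<in>{1..r}. p s * (\<Prod>j<m. Fq r p F Q s (X j)))"
proof -
  have ins: "{..<1 + m * Q} = insert 0 {1..<1 + m * Q}" by auto
  have "gs r p F {..<1 + m * Q} (\<Union>j<m. sE Q j) (tX Q X) (\<lambda>_. undefined) =
     (\<Sum>s\<in>{1..r}. p s * gs r p F {1..<1 + m * Q} (\<Union>j<m. sE Q j) (tX Q X) ((\<lambda>_. undefined)(0 := s)))"
    unfolding ins by (rule gs_ins) auto
  also have "\<dots> = (\<Sum>s\<in>{1..r}. p s * (\<Prod>j<m. Fq r p F Q s (X j)))"
  proof (intro sum.cong refl arg_cong2[where f="(*)"])
    fix s assume s: "s \<in> {1..r}"
    have ps: "p s > 0" using M s unfolding wsbm_model_def by auto
    show "gs r p F {1..<1 + m * Q} (\<Union>j<m. sE Q j) (tX Q X) ((\<lambda>_. undefined)(0 := s)) = (\<Prod>j<m. Fq r p F Q s (X j))"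
      unfolding multi
    proof (intro prod.cong refl)
      fix j
      show "gs r p F (sN Q j) (sE Q j) (tX Q X) ((\<lambda>_. undefined)(0 := s)) = Fq r p F Q s (X j)"
        unfolding sN_def sE_def
      proof (rule place)
        fix e assume e: "e \<in> star_edges Q"
        have k: "1 \<le> snd e" "snd e \<le> Q" using star_snd[OF e] by auto
        have "snd (map_prod (pl 0 (1 + j * Q)) (pl 0 (1 + j * Q)) e) = snd e + (1 + j * Q) - 1"
          using pl_edge(2)[OF e, of 0 "1 + j * Q"] by simp
        then show "tX Q X (map_prod (pl 0 (1 + j * Q)) (pl 0 (1 + j * Q)) e) = X j (snd e)"
          unfolding tX_def using div_helper[OF k, of j] by simp
      qed (use s ps in auto)
    qed
  qed
  finally show ?thesis .
qed

lemma star_sub: "(\<Union>j<m. sE Q j) \<subseteq> all_pairs (1 + m * Q)"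
proof
  fix e assume "e \<in> (\<Union>j<m. sE Q j)"
  then obtain j where j: "j < m" "e \<in> sE Q j" by blast
  have "snd e < 1 + j * Q + Q" using sE_snd[OF j(2)] sN_eq by auto
  also have "\<dots> \<le> 1 + m * Q"
  proof -
    have "Suc j * Q \<le> m * Q" using j(1) by (intro mult_le_mono1) simp
    then show ?thesis by simp
  qed
  finally show "e \<in> all_pairs (1 + m * Q)"
    using sE_lt[OF j(2)] unfolding all_pairs_def by (cases e) auto
qed


definition EA :: "nat \<Rightarrow> (nat \<times> nat) set" where
  "EA Q = map_prod (pl 0 2) (pl 0 2) ` star_edges Q"
definition EB :: "nat \<Rightarrow> (nat \<times> nat) set" where
  "EB Q = map_prod (pl 1 (Q + 2)) (pl 1 (Q + 2)) ` star_edges Q"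
definition E2c :: "nat \<Rightarrow> (nat \<times> nat) set" where
  "E2c Q = {(0, 1)} \<union> (EA Q \<union> EB Q)"
definition t2 :: "nat \<Rightarrow> (nat \<Rightarrow> real) \<Rightarrow> (nat \<Rightarrow> real) \<Rightarrow> real \<Rightarrow> nat \<times> nat \<Rightarrow> real" where
  "t2 Q x y s e = (if e = (0, 1) then s else if snd e \<le> Q + 1 then x (snd e - 1) else y (snd e - Q - 1))"

lemma EA_props: "e \<in> EA Q \<Longrightarrow> fst e < snd e \<and> 2 \<le> snd e \<and> snd e < 2 + Q"
  unfolding EA_def using pl_edge[of _ Q 0 2] by force

lemma EB_props: "e \<in> EB Q \<Longrightarrow> fst e < snd e \<and> Q + 2 \<le> snd e \<and> snd e < Q + 2 + Q"
  unfolding EB_def using pl_edge[of _ Q 1 "Q + 2"] by force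

lemma two_sub: "E2c Q \<subseteq> all_pairs (2 * Q + 2)"
  unfolding E2c_def all_pairs_def using EA_props EB_props by force

lemma two_ident:
  assumes M: "wsbm_model r p F"
  shows "gs r p F {..<2 * Q + 2} (E2c Q) (t2 Q x y s) (\<lambda>_. undefined) =
    (\<Sum>a\<in>{1..r}. p a * (\<Sum>b\<in>{1..r}. p b * (cdf (F a b) s * (Fq r p F Q a x * Fq r p F Q b y))))"
proof -
  have ins: "{..<2 * Q + 2} = insert 0 (insert 1 {2..<2 * Q + 2})" by auto
  have core: "gs r p F {2..<2 * Q + 2} (E2c Q) (t2 Q x y s) ((\<lambda>_. undefined)(0 := a, 1 := b)) =
      cdf (F a b) s * (Fq r p F Q a x * Fq r p F Q b y)" if a: "a \<in> {1..r}" and b: "b \<in> {1..r}" for a b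
  proof -
    let ?w = "(\<lambda>_. undefined)(0 := a, 1 := b)" and ?t = "t2 Q x y s"
    have pa: "p a > 0" "p b > 0" using M a b unfolding wsbm_model_def by auto
    have NA: "pl 0 2 ` {1..Q} = {2..<2 + Q}" by (rule pl_image) simp
    have NB: "pl 1 (Q + 2) ` {1..Q} = {Q + 2..<Q + 2 + Q}" by (rule pl_image) simp
    have N: "{2..<2 * Q + 2} = {} \<union> ({2..<2 + Q} \<union> {Q + 2..<Q + 2 + Q})" by auto
    have finA: "finite (EA Q)" "finite (EB Q)" unfolding EA_def EB_def using finite_star by auto
    have endsA: "ends (EA Q) \<subseteq> insert 0 {2..<2 + Q}" unfolding EA_def using pl_ends[of 0 2 Q] by simp
    have endsB: "ends (EB Q) \<subseteq> insert 1 {Q + 2..<Q + 2 + Q}" unfolding EB_def using pl_ends[of 1 "Q + 2" Q] by simp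
    have "gs r p F ({} \<union> ({2..<2 + Q} \<union> {Q + 2..<Q + 2 + Q})) ({(0, 1)} \<union> (EA Q \<union> EB Q)) ?t ?w =
        gs r p F {} {(0, 1)} ?t ?w * gs r p F ({2..<2 + Q} \<union> {Q + 2..<Q + 2 + Q}) (EA Q \<union> EB Q) ?t ?w"
    proof (rule gs_prod)
      show "{(0::nat, 1::nat)} \<inter> (EA Q \<union> EB Q) = {}" using EA_props EB_props by force
      show "ends {(0::nat, 1::nat)} \<inter> ({2..<2 + Q} \<union> {Q + 2..<Q + 2 + Q}) = {}" by (auto simp: ends_def)
    qed (use finA in auto)
    moreover have "gs r p F {} {(0, 1)} ?t ?w = cdf (F a b) s"
      by (simp add: gs_empty kprod_def t2_def)
    moreover have "gs r p F ({2..<2 + Q} \<union> {Q + 2..<Q + 2 + Q}) (EA Q \<union> EB Q) ?t ?w =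
        gs r p F {2..<2 + Q} (EA Q) ?t ?w * gs r p F {Q + 2..<Q + 2 + Q} (EB Q) ?t ?w"
    proof (rule gs_prod)
      show "EA Q \<inter> EB Q = {}" using EA_props EB_props by force
      show "ends (EA Q) \<inter> {Q + 2..<Q + 2 + Q} = {}" using endsA by auto
      show "ends (EB Q) \<inter> {2..<2 + Q} = {}" using endsB by auto
    qed (use finA in auto)
    moreover have "gs r p F {2..<2 + Q} (EA Q) ?t ?w = Fq r p F Q a x"
      unfolding NA[symmetric] EA_def
    proof (rule place)
      fix e assume e: "e \<in> star_edges Q"
      have "snd (map_prod (pl 0 2) (pl 0 2) e) = snd e + 1" "2 \<le> snd (map_prod (pl 0 2) (pl 0 2) e)"
        "snd (map_prod (pl 0 2) (pl 0 2) e) < 2 + Q"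
        using pl_edge[OF e, of 0 2] by auto
      then show "?t (map_prod (pl 0 2) (pl 0 2) e) = x (snd e)"
        unfolding t2_def by (cases "map_prod (pl 0 2) (pl 0 2) e") auto
    qed (use a pa in auto)
    moreover have "gs r p F {Q + 2..<Q + 2 + Q} (EB Q) ?t ?w = Fq r p F Q b y"
      unfolding NB[symmetric] EB_def
    proof (rule place)
      fix e assume e: "e \<in> star_edges Q"
      define e' where "e' = map_prod (pl 1 (Q + 2)) (pl 1 (Q + 2)) e"
      have h: "snd e' = snd e + Q + 1" "Q + 2 \<le> snd e'"
        using pl_edge[OF e, of 1 "Q + 2"] unfolding e'_def by auto
      then have "e' \<noteq> (0, 1)" "\<not> snd e' \<le> Q + 1" by auto
      then show "?t (map_prod (pl 1 (Q + 2)) (pl 1 (Q + 2)) e) = y (snd e)"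
        unfolding e'_def[symmetric] t2_def using h by simp
    qed (use b pa in auto)
    ultimately show ?thesis unfolding E2c_def N by simp
  qed
  have "gs r p F {..<2 * Q + 2} (E2c Q) (t2 Q x y s) (\<lambda>_. undefined) =
     (\<Sum>a\<in>{1..r}. p a * gs r p F (insert 1 {2..<2 * Q + 2}) (E2c Q) (t2 Q x y s) ((\<lambda>_. undefined)(0 := a)))"
    unfolding ins by (rule gs_ins) auto
  also have "\<dots> = (\<Sum>a\<in>{1..r}. p a * (\<Sum>b\<in>{1..r}. p b * gs r p F {2..<2 * Q + 2} (E2c Q) (t2 Q x y s) ((\<lambda>_. undefined)(0 := a, 1 := b))))"
    by (intro sum.cong refl arg_cong2[where f="(*)"] gs_ins) auto
  also have "\<dots> = (\<Sum>a\<in>{1..r}. p a * (\<Sum>b\<in>{1..r}. p b * (cdf (F a b) s * (Fq r p F Q a x * Fq r p F Q b y))))"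
    using core by (intro sum.cong refl arg_cong2[where f="(*)"]) auto
  finally show ?thesis .
qed



lemma star_mono: "q \<le> Q \<Longrightarrow> star_edges q \<subseteq> star_edges Q"
  by (auto simp: star_edges_def)

lemma li_mono:
  assumes M: "wsbm_model r p F" and li: "Fq_lin_indep r p F q" and qQ: "q \<le> Q"
  shows "Fq_lin_indep r p F Q"
  unfolding Fq_lin_indep_def
proof (intro allI impI)
  fix c :: "nat \<Rightarrow> real"
  assume H: "\<forall>x. (\<Sum>z=1..r. c z * Fq r p F Q z x) = 0"
  have RD: "\<forall>a\<in>{1..r}. \<forall>b\<in>{1..r}. real_distribution (F a b)" using M unfolding wsbm_model_def by auto
  have "(\<Sum>z=1..r. c z * Fq r p F q z x) = 0" for x
  proof -
    define xm where "xm m = (\<lambda>j. if j \<le> q then x j else real m)" for m :: nat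
    have lim: "(\<lambda>m. Fq r p F Q z (xm m)) \<longlonglongrightarrow> Fq r p F q z x" if z: "z \<in> {1..r}" for z
    proof -
      have pz: "p z > 0" using M z unfolding wsbm_model_def by auto
      have eq1: "Fq r p F Q z (xm m) = gs r p F {1..Q} (star_edges Q)
          (\<lambda>e. if e \<in> star_edges q then x (snd e) else real m) (\<lambda>_. z)" for m
        unfolding fq_gs[where c=z and r=r and p=p, OF z pz]
      proof (rule gs_tcong)
        fix e assume e: "e \<in> star_edges Q"
        have "e \<in> star_edges q \<longleftrightarrow> snd e \<le> q" using e by (auto simp: star_edges_def)
        then show "xm m (snd e) = (if e \<in> star_edges q then x (snd e) else real m)"
          by (simp add: xm_def)
      qed
      have L: "(\<lambda>m. gs r p F {1..Q} (star_edges Q) (\<lambda>e. if e \<in> star_edges q then x (snd e) else real m) (\<lambda>_. z))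
          \<longlonglongrightarrow> gs r p F {1..Q} (star_edges q) (\<lambda>e. x (snd e)) (\<lambda>_. z)"
        by (rule gs_lim[OF _ finite_star star_mono[OF qQ] RD]) (use z in auto)
      have split: "{1..Q} = {1..q} \<union> {q+1..Q}" using qQ by auto
      have "gs r p F ({1..q} \<union> {q+1..Q}) (star_edges q \<union> {}) (\<lambda>e. x (snd e)) (\<lambda>_. z) =
          gs r p F {1..q} (star_edges q) (\<lambda>e. x (snd e)) (\<lambda>_. z) * gs r p F {q+1..Q} {} (\<lambda>e. x (snd e)) (\<lambda>_. z)"
        by (rule gs_prod) (use ends_star[of q] finite_star in \<open>auto simp: ends_def\<close>)
      also have "\<dots> = Fq r p F q z x"
        using gs_noedge[of "{q+1..Q}" p r] M fq_gs[where c=z and r=r and p=p, OF z pz]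
        unfolding wsbm_model_def by simp
      finally have "gs r p F {1..Q} (star_edges q) (\<lambda>e. x (snd e)) (\<lambda>_. z) = Fq r p F q z x"
        unfolding split by simp
      then show ?thesis using L unfolding eq1 by simp
    qed
    have T: "(\<lambda>m. \<Sum>z=1..r. c z * Fq r p F Q z (xm m)) \<longlonglongrightarrow> (\<Sum>z=1..r. c z * Fq r p F q z x)"
      by (intro tendsto_sum tendsto_mult tendsto_const lim) auto
    have Z: "(\<lambda>m. \<Sum>z=1..r. c z * Fq r p F Q z (xm m)) = (\<lambda>m. 0)" using H by simp
    have "(\<lambda>m::nat. 0::real) \<longlonglongrightarrow> (\<Sum>z=1..r. c z * Fq r p F q z x)" using T unfolding Z .
    from LIMSEQ_unique[OF tendsto_const this] show ?thesis by simp
  qed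
  then show "\<forall>z\<in>{1..r}. c z = 0" using li unfolding Fq_lin_indep_def by blast
qed

lemma coef2:
  fixes f :: "nat \<Rightarrow> 'd \<Rightarrow> real"
  assumes li: "lin_indep_on S f" and fin: "finite S"
    and H: "\<And>x y. (\<Sum>a\<in>S. \<Sum>b\<in>S. K a b * (f a x * f b y)) = (\<Sum>a\<in>S. \<Sum>b\<in>S. K' a b * (f a x * f b y))"
    and a: "a \<in> S" and b: "b \<in> S"
  shows "K a b = K' a b"
proof -
  have inner: "(\<Sum>b\<in>S. (K a b - K' a b) * f b y) = 0" for y
  proof -
    have "(\<Sum>a\<in>S. (\<Sum>b\<in>S. (K a b - K' a b) * f b y) * f a x) = 0" for x
    proof -
      have "(\<Sum>a\<in>S. (\<Sum>b\<in>S. (K a b - K' a b) * f b y) * f a x) =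
          (\<Sum>a\<in>S. \<Sum>b\<in>S. K a b * (f a x * f b y) - K' a b * (f a x * f b y))"
        unfolding sum_distrib_right by (intro sum.cong refl) (simp add: algebra_simps)
      also have "\<dots> = 0" unfolding sum_subtractf H by simp
      finally show ?thesis .
    qed
    then show ?thesis
      using li[unfolded lin_indep_on_def, rule_format, of "\<lambda>a. \<Sum>b\<in>S. (K a b - K' a b) * f b y"] a by blast
  qed
  then have "K a b - K' a b = 0"
    using li[unfolded lin_indep_on_def, rule_format, of "\<lambda>b. K a b - K' a b"] b by blast
  then show ?thesis by simp
qed



theorem proposition1:
  fixes r r' :: nat and p p' :: "nat \<Rightarrow> real" and F F' :: "nat \<Rightarrow> nat \<Rightarrow> real measure"
  assumes "wsbm_assumptions r p F"
    and "wsbm_assumptions r' p' F'"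
    and "\<forall>n t. wsbm_joint_cdf r p F n t = wsbm_joint_cdf r' p' F' n t"
  shows "r = r' \<and>
    (\<exists>\<sigma>. bij_betw \<sigma> {1..r} {1..r} \<and> (\<forall>z\<in>{1..r}. p' (\<sigma> z) = p z) \<and>
         (\<forall>a\<in>{1..r}. \<forall>b\<in>{1..r}. F' (\<sigma> a) (\<sigma> b) = F a b))"
proof -
  have M1: "wsbm_model r p F" and ex1: "\<exists>q. Fq_lin_indep r p F q" and pos1: "(LEAST q. Fq_lin_indep r p F q) > 0"
    using assms(1) unfolding wsbm_assumptions_def by auto
  have M2: "wsbm_model r' p' F'" and ex2: "\<exists>q. Fq_lin_indep r' p' F' q" and pos2: "(LEAST q. Fq_lin_indep r' p' F' q) > 0"
    using assms(2) unfolding wsbm_assumptions_def by auto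
  define q1 where "q1 = (LEAST q. Fq_lin_indep r p F q)"
  define q2 where "q2 = (LEAST q. Fq_lin_indep r' p' F' q)"
  have li1: "Fq_lin_indep r p F q1" unfolding q1_def by (rule LeastI_ex[OF ex1])
  have li2: "Fq_lin_indep r' p' F' q2" unfolding q2_def by (rule LeastI_ex[OF ex2])
  define Q where "Q = max q1 q2"
  have hQ: "1 \<le> Q" using pos1 unfolding Q_def q1_def by simp
  have liQ1: "Fq_lin_indep r p F Q" by (rule li_mono[OF M1 li1]) (simp add: Q_def)
  have liQ2: "Fq_lin_indep r' p' F' Q" by (rule li_mono[OF M2 li2]) (simp add: Q_def)
  have RD1: "\<forall>a\<in>{1..r}. \<forall>b\<in>{1..r}. real_distribution (F a b)" using M1 unfolding wsbm_model_def by auto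
  have RD2: "\<forall>a\<in>{1..r'}. \<forall>b\<in>{1..r'}. real_distribution (F' a b)" using M2 unfolding wsbm_model_def by auto
  have pp1: "\<forall>z\<in>{1..r}. p z > 0" using M1 unfolding wsbm_model_def by auto
  have pp2: "\<forall>z\<in>{1..r'}. p' z > 0" using M2 unfolding wsbm_model_def by auto
  define f where "f = Fq r p F Q"
  define g where "g = Fq r' p' F' Q"
  have mg: "gs r p F {..<n} E t (\<lambda>_. undefined) = gs r' p' F' {..<n} E t (\<lambda>_. undefined)"
    if "E \<subseteq> all_pairs n" for n E t
    using marginal[OF RD1 RD2 assms(3) that] .
  have SI: "(\<Sum>s\<in>{1..r}. p s * (\<Prod>j<m. f s (X j))) = (\<Sum>s\<in>{1..r'}. p' s * (\<Prod>j<m. g s (X j)))" for m :: nat and X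
  proof -
    have "(\<Sum>s\<in>{1..r}. p s * (\<Prod>j<m. f s (X j))) = gs r p F {..<1 + m * Q} (\<Union>j<m. sE Q j) (tX Q X) (\<lambda>_. undefined)"
      unfolding f_def by (rule star_ident[OF M1 hQ, symmetric])
    also have "\<dots> = gs r' p' F' {..<1 + m * Q} (\<Union>j<m. sE Q j) (tX Q X) (\<lambda>_. undefined)"
      by (rule mg[OF star_sub])
    also have "\<dots> = (\<Sum>s\<in>{1..r'}. p' s * (\<Prod>j<m. g s (X j)))"
      unfolding g_def by (rule star_ident[OF M2 hQ])
    finally show ?thesis .
  qed
  have H2: "(\<Sum>c\<in>{1..r}. p c * (f c x * f c y)) = (\<Sum>c\<in>{1..r'}. p' c * (g c x * g c y))" for x y
    using SI[where m=2 and X="\<lambda>j. if j = 0 then x else y"] by (simp add: numeral_2_eq_2)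
  have H3: "(\<Sum>c\<in>{1..r}. p c * (f c x * (f c y * f c w))) = (\<Sum>c\<in>{1..r'}. p' c * (g c x * (g c y * g c w)))" for x y w
    using SI[where m=3 and X="\<lambda>j. if j = 0 then x else if j = 1 then y else w"] by (simp add: numeral_3_eq_3 mult.assoc)
  have lif: "lin_indep_on {1..r} f" using liQ1 unfolding Fq_lin_indep_def lin_indep_on_def f_def by blast
  have lig: "lin_indep_on {1..r'} g" using liQ2 unfolding Fq_lin_indep_def lin_indep_on_def g_def by blast
  obtain \<tau> where bij: "bij_betw \<tau> {1..r'} {1..r}" and tg: "\<forall>v\<in>{1..r'}. g v = f (\<tau> v) \<and> p' v = p (\<tau> v)"
    using ident[OF finite_atLeastAtMost finite_atLeastAtMost lif lig pp1 pp2 H2 H3] by blast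
  have rr: "r = r'" using bij_betw_same_card[OF bij] by simp
  define \<sigma> where "\<sigma> = inv_into {1..r'} \<tau>"
  have bs: "bij_betw \<sigma> {1..r} {1..r'}" unfolding \<sigma>_def by (rule bij_betw_inv_into[OF bij])
  have st: "\<tau> (\<sigma> z) = z" "\<sigma> z \<in> {1..r'}" if "z \<in> {1..r}" for z
  proof -
    have zi: "z \<in> \<tau> ` {1..r'}" using bij that unfolding bij_betw_def by auto
    show "\<tau> (\<sigma> z) = z" unfolding \<sigma>_def by (rule f_inv_into_f[OF zi])
    show "\<sigma> z \<in> {1..r'}" unfolding \<sigma>_def by (rule inv_into_into[OF zi])
  qed
  have ps: "p' (\<sigma> z) = p z" and gs': "g (\<sigma> z) = f z" if "z \<in> {1..r}" for z
    using tg st[OF that] by auto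
  have FF: "F' (\<sigma> a) (\<sigma> b) = F a b" if a: "a \<in> {1..r}" and b: "b \<in> {1..r}" for a b
  proof -
    have TI: "(\<Sum>a\<in>{1..r}. p a * (\<Sum>b\<in>{1..r}. p b * (cdf (F a b) s * (f a x * f b y)))) =
              (\<Sum>a\<in>{1..r'}. p' a * (\<Sum>b\<in>{1..r'}. p' b * (cdf (F' a b) s * (g a x * g b y))))" for x y s
    proof -
      have "(\<Sum>a\<in>{1..r}. p a * (\<Sum>b\<in>{1..r}. p b * (cdf (F a b) s * (f a x * f b y)))) =
          gs r p F {..<2 * Q + 2} (E2c Q) (t2 Q x y s) (\<lambda>_. undefined)"
        unfolding f_def by (rule two_ident[OF M1, symmetric])
      also have "\<dots> = gs r' p' F' {..<2 * Q + 2} (E2c Q) (t2 Q x y s) (\<lambda>_. undefined)"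
        by (rule mg[OF two_sub])
      also have "\<dots> = (\<Sum>a\<in>{1..r'}. p' a * (\<Sum>b\<in>{1..r'}. p' b * (cdf (F' a b) s * (g a x * g b y))))"
        unfolding g_def by (rule two_ident[OF M2])
      finally show ?thesis .
    qed
    have conv: "(\<Sum>a\<in>A. pa a * (\<Sum>b\<in>A. pa b * (C a b * (h a x * h b y)))) =
        (\<Sum>a\<in>A. \<Sum>b\<in>A. (pa a * pa b * C a b) * (h a x * h b y))"
      for A :: "nat set" and pa :: "nat \<Rightarrow> real" and C :: "nat \<Rightarrow> nat \<Rightarrow> real" and h :: "nat \<Rightarrow> (nat \<Rightarrow> real) \<Rightarrow> real" and x y
      unfolding sum_distrib_left by (intro sum.cong refl) (simp add: algebra_simps)
    have RI: "(\<Sum>a\<in>{1..r'}. p' a * (\<Sum>b\<in>{1..r'}. p' b * (cdf (F' a b) s * (g a x * g b y)))) =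
        (\<Sum>a\<in>{1..r}. p a * (\<Sum>b\<in>{1..r}. p b * (cdf (F' (\<sigma> a) (\<sigma> b)) s * (f a x * f b y))))" for x y s
    proof -
      have "(\<Sum>a\<in>{1..r'}. p' a * (\<Sum>b\<in>{1..r'}. p' b * (cdf (F' a b) s * (g a x * g b y)))) =
          (\<Sum>a\<in>{1..r}. p' (\<sigma> a) * (\<Sum>b\<in>{1..r'}. p' b * (cdf (F' (\<sigma> a) b) s * (g (\<sigma> a) x * g b y))))"
        by (rule sum.reindex_bij_betw[OF bs, symmetric])
      also have "\<dots> = (\<Sum>a\<in>{1..r}. p' (\<sigma> a) * (\<Sum>b\<in>{1..r}. p' (\<sigma> b) * (cdf (F' (\<sigma> a) (\<sigma> b)) s * (g (\<sigma> a) x * g (\<sigma> b) y))))"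
        by (intro sum.cong refl arg_cong2[where f="(*)"] sum.reindex_bij_betw[OF bs, symmetric])
      also have "\<dots> = (\<Sum>a\<in>{1..r}. p a * (\<Sum>b\<in>{1..r}. p b * (cdf (F' (\<sigma> a) (\<sigma> b)) s * (f a x * f b y))))"
        using ps gs' by (intro sum.cong refl) auto
      finally show ?thesis .
    qed
    have "p a * p b * cdf (F a b) s = p a * p b * cdf (F' (\<sigma> a) (\<sigma> b)) s" for s
    proof (rule coef2[OF lif finite_atLeastAtMost _ a b])
      fix x y
      show "(\<Sum>a\<in>{1..r}. \<Sum>b\<in>{1..r}. (p a * p b * cdf (F a b) s) * (f a x * f b y)) =
            (\<Sum>a\<in>{1..r}. \<Sum>b\<in>{1..r}. (p a * p b * cdf (F' (\<sigma> a) (\<sigma> b)) s) * (f a x * f b y))"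
        using TI[where x=x and y=y and s=s] RI[where x=x and y=y and s=s]
          conv[where A="{1..r}" and pa=p and C="\<lambda>a b. cdf (F a b) s" and h=f and x=x and y=y]
          conv[where A="{1..r}" and pa=p and C="\<lambda>a b. cdf (F' (\<sigma> a) (\<sigma> b)) s" and h=f and x=x and y=y] by simp
    qed
    moreover have "p a * p b \<noteq> 0" using pp1 a b by (metis less_irrefl mult_eq_0_iff)
    ultimately have "cdf (F a b) = cdf (F' (\<sigma> a) (\<sigma> b))" by (intro ext) simp
    moreover have "real_distribution (F a b)" using RD1 a b by auto
    moreover have "real_distribution (F' (\<sigma> a) (\<sigma> b))" using RD2 st a b by auto
    ultimately show ?thesis using cdf_unique by metis
  qed
  show ?thesis
  proof (intro conjI exI)
    show "r = r'" by (rule rr)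
    show "bij_betw \<sigma> {1..r} {1..r}" using bs rr by simp
    show "\<forall>z\<in>{1..r}. p' (\<sigma> z) = p z" using ps by auto
    show "\<forall>a\<in>{1..r}. \<forall>b\<in>{1..r}. F' (\<sigma> a) (\<sigma> b) = F a b" using FF by auto
  qed
qed

end
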